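(* Let $\mathfrak p\in\mathcal F^*$ and let $N$ be an $R$-module with $\mathfrak pN=0$. Then: (a) $N$ is $\mathcal F$-torsion-free if and only if $N$ is torsion-free as a module over the domain $R/\mathfrak p$; (b) $N$ is $\mathcal F$-divisible if and only if $N$ is divisible as a module over the domain $R/\mathfrak p$.
   Context: Throughout, $R$ is a commutative Noetherian local ring and $\mathcal F$ is a Gabriel topology on $R$: a nonempty set of ideals of $R$ such that (1) if $\mathfrak a\in\mathcal F$ and $\mathfrak a\subseteq\mathfrak b$ then $\mathfrak b\in\mathcal F$; (2) if $\mathfrak a,\mathfrak b\in\mathcal F$ then $\mathfrak a\cap\mathfrak b\in\mathcal F$; (3) if $\mathfrak b$ is an ideal and there is $\mathfrak a\in\mathcal F$ with $(\mathfrak b:r)\in\mathcal F$ for all $r\in\mathfrak a$, then $\mathfrak b\in\mathcal F$. For an $R$-module $X$ and ideal $\mathfrak a$, $X[\mathfrak a]=\{x\in X:\mathfrak a x=0\}$. $X$ is $\mathcal F$-torsion-free if $X[\mathfrak a]=0$ for all $\mathfrak a\in\mathcal F$, and $\mathcal F$-divisible if $\mathfrak aX=X$ for all $\mathfrak a\in\mathcal F$. $\mathcal F^*$ denotes the set of maximal elements (under inclusion) of $\mathrm{Spec}(R)\setminus\mathcal F$. Over a domain $D$, a module $X$ is torsion-free if no nonzero element of $D$ annihilates a nonzero element of $X$, and divisible if $dX=X$ for all $0\ne d\in D$. *)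

theory Defs
  imports Complex_Main
begin

definition is_ideal :: "'a::comm_ring_1 set \<Rightarrow> bool" where
  "is_ideal I \<longleftrightarrow> 0 \<in> I \<and> (\<forall>x\<in>I. \<forall>y\<in>I. x + y \<in> I) \<and> (\<forall>r. \<forall>x\<in>I. r * x \<in> I)"

definition prime_ideal :: "'a::comm_ring_1 set \<Rightarrow> bool" where
  "prime_ideal P \<longleftrightarrow> is_ideal P \<and> P \<noteq> UNIV \<and> (\<forall>a b. a * b \<in> P \<longrightarrow> a \<in> P \<or> b \<in> P)"

definition maximal_ideal :: "'a::comm_ring_1 set \<Rightarrow> bool" where
  "maximal_ideal M \<longleftrightarrow> is_ideal M \<and> M \<noteq> UNIV \<and>
     (\<forall>J. is_ideal J \<and> M \<subseteq> J \<longrightarrow> J = M \<or> J = UNIV)"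

definition noetherian_ring :: "'a::comm_ring_1 itself \<Rightarrow> bool" where
  "noetherian_ring _ \<longleftrightarrow> (\<forall>f :: nat \<Rightarrow> 'a set. (\<forall>n. is_ideal (f n)) \<and> (\<forall>n. f n \<subseteq> f (Suc n))
        \<longrightarrow> (\<exists>n. \<forall>m\<ge>n. f m = f n))"

definition local_ring :: "'a::comm_ring_1 itself \<Rightarrow> bool" where
  "local_ring _ \<longleftrightarrow> (\<exists>!M :: 'a set. maximal_ideal M)"

definition colon_ideal :: "'a::comm_ring_1 set \<Rightarrow> 'a \<Rightarrow> 'a set" where
  "colon_ideal B r = {s. s * r \<in> B}"

definition gabriel_topology :: "'a::comm_ring_1 set set \<Rightarrow> bool" where
  "gabriel_topology F \<longleftrightarrow> F \<noteq> {} \<and> (\<forall>A\<in>F. is_ideal A) \<and>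
     (\<forall>A B. A \<in> F \<and> is_ideal B \<and> A \<subseteq> B \<longrightarrow> B \<in> F) \<and>
     (\<forall>A\<in>F. \<forall>B\<in>F. A \<inter> B \<in> F) \<and>
     (\<forall>B. is_ideal B \<and> (\<exists>A\<in>F. \<forall>r\<in>A. colon_ideal B r \<in> F) \<longrightarrow> B \<in> F)"

definition F_star :: "'a::comm_ring_1 set set \<Rightarrow> 'a set set" where
  "F_star F = {P. prime_ideal P \<and> P \<notin> F \<and>
      (\<forall>Q. prime_ideal Q \<and> Q \<notin> F \<and> P \<subseteq> Q \<longrightarrow> Q = P)}"

definition ann_sub :: "('a \<Rightarrow> 'b \<Rightarrow> 'b::ab_group_add) \<Rightarrow> 'a set \<Rightarrow> 'b set" where
  "ann_sub scale A = {x. \<forall>r\<in>A. scale r x = 0}"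

definition ideal_times :: "('a::comm_ring_1 \<Rightarrow> 'b \<Rightarrow> 'b::ab_group_add) \<Rightarrow> 'a set \<Rightarrow> 'b set" where
  "ideal_times scale A = module.span scale {scale r x | r x. r \<in> A}"

definition F_torsion_free :: "('a::comm_ring_1 \<Rightarrow> 'b \<Rightarrow> 'b::ab_group_add) \<Rightarrow> 'a set set \<Rightarrow> bool" where
  "F_torsion_free scale F \<longleftrightarrow> (\<forall>A\<in>F. ann_sub scale A = {0})"

definition F_divisible :: "('a::comm_ring_1 \<Rightarrow> 'b \<Rightarrow> 'b::ab_group_add) \<Rightarrow> 'a set set \<Rightarrow> bool" where
  "F_divisible scale F \<longleftrightarrow> (\<forall>A\<in>F. ideal_times scale A = UNIV)"

text \<open>For N with P N = 0, the R/P-module structure is (r + P) x = r x; the nonzero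
  elements of R/P are the classes of r not in P.\<close>
definition torsion_free_mod :: "('a::comm_ring_1 \<Rightarrow> 'b \<Rightarrow> 'b::ab_group_add) \<Rightarrow> 'a set \<Rightarrow> bool" where
  "torsion_free_mod scale P \<longleftrightarrow> (\<forall>d. d \<notin> P \<longrightarrow> (\<forall>x. scale d x = 0 \<longrightarrow> x = 0))"

definition divisible_mod :: "('a::comm_ring_1 \<Rightarrow> 'b \<Rightarrow> 'b::ab_group_add) \<Rightarrow> 'a set \<Rightarrow> bool" where
  "divisible_mod scale P \<longleftrightarrow> (\<forall>d. d \<notin> P \<longrightarrow> range (scale d) = UNIV)"

end

theory Submission
  imports Defs
begin

definition gen_id :: "'a::comm_ring_1 set \<Rightarrow> 'a \<Rightarrow> 'a set" where
  "gen_id I a = {p + s * a | p s. p \<in> I}"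

lemma gen_id_ideal:
  assumes "is_ideal I" shows "is_ideal (gen_id I a)"
  unfolding is_ideal_def gen_id_def
proof (intro conjI ballI allI)
  show "0 \<in> {p + s * a |p s. p \<in> I}"
    using assms unfolding is_ideal_def by (metis (mono_tags, lifting) add_0 mem_Collect_eq mult_zero_left)
next
  fix x y assume "x \<in> {p + s * a |p s. p \<in> I}" "y \<in> {p + s * a |p s. p \<in> I}"
  then obtain p s q t where "x = p + s*a" "y = q + t*a" "p \<in> I" "q \<in> I" by blast
  moreover have "p + q \<in> I" using assms \<open>p\<in>I\<close> \<open>q\<in>I\<close> unfolding is_ideal_def by blast
  moreover have "x + y = (p+q) + (s+t)*a" using calculation by (simp add: algebra_simps)
  ultimately show "x + y \<in> {p + s * a |p s. p \<in> I}" by blast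
next
  fix r x assume "x \<in> {p + s * a |p s. p \<in> I}"
  then obtain p s where "x = p + s*a" "p \<in> I" by blast
  moreover have "r*p \<in> I" using assms \<open>p\<in>I\<close> unfolding is_ideal_def by blast
  moreover have "r*x = r*p + (r*s)*a" using calculation by (simp add: algebra_simps)
  ultimately show "r * x \<in> {p + s * a |p s. p \<in> I}" by blast
qed

lemma gen_id_sub: "is_ideal I \<Longrightarrow> I \<subseteq> gen_id I a"
proof
  fix x assume "x \<in> I"
  hence "x = x + 0 * a \<and> x \<in> I" by simp
  thus "x \<in> gen_id I a" unfolding gen_id_def by blast
qed

lemma gen_id_mem: "is_ideal I \<Longrightarrow> a \<in> gen_id I a"
proof -
  assume "is_ideal I"
  hence "a = 0 + 1 * a \<and> 0 \<in> I" unfolding is_ideal_def by simp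
  thus "a \<in> gen_id I a" unfolding gen_id_def by blast
qed

lemma colon_ideal_ideal:
  assumes "is_ideal B" shows "is_ideal (colon_ideal B r)"
  unfolding is_ideal_def colon_ideal_def
proof (intro conjI ballI allI)
  show "0 \<in> {s. s * r \<in> B}" using assms unfolding is_ideal_def by simp
next
  fix x y assume "x \<in> {s. s * r \<in> B}" "y \<in> {s. s * r \<in> B}"
  thus "x + y \<in> {s. s * r \<in> B}" using assms unfolding is_ideal_def
    by (simp add: distrib_right)
next
  fix c x assume "x \<in> {s. s * r \<in> B}"
  thus "c * x \<in> {s. s * r \<in> B}" using assms unfolding is_ideal_def
    by (simp add: mult.assoc)
qed

lemma gt_up: "gabriel_topology F \<Longrightarrow> A \<in> F \<Longrightarrow> is_ideal B \<Longrightarrow> A \<subseteq> B \<Longrightarrow> B \<in> F"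
  unfolding gabriel_topology_def by blast

lemma gt_colon: "gabriel_topology F \<Longrightarrow> is_ideal B \<Longrightarrow> A \<in> F \<Longrightarrow>
   (\<And>r. r \<in> A \<Longrightarrow> colon_ideal B r \<in> F) \<Longrightarrow> B \<in> F"
proof -
  assume g: "gabriel_topology F" and B: "is_ideal B" and A: "A \<in> F"
    and c: "\<And>r. r \<in> A \<Longrightarrow> colon_ideal B r \<in> F"
  have ax: "\<forall>B. is_ideal B \<and> (\<exists>A\<in>F. \<forall>r\<in>A. colon_ideal B r \<in> F) \<longrightarrow> B \<in> F"
    using g unfolding gabriel_topology_def by (elim conjE)
  have e: "\<exists>A\<in>F. \<forall>r\<in>A. colon_ideal B r \<in> F" using A c by blast
  show "B \<in> F" using ax B e by blast
qed

lemma UNIV_in_F: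
  assumes "gabriel_topology F" shows "UNIV \<in> F"
proof -
  have "F \<noteq> {}" using assms unfolding gabriel_topology_def by (elim conjE)
  then obtain A where A: "A \<in> F" by blast
  have "is_ideal (UNIV :: 'a set)" unfolding is_ideal_def by simp
  thus ?thesis using gt_up[OF assms A] by blast
qed

lemma max_exists:
  assumes noeth: "noetherian_ring TYPE('a::comm_ring_1)"
    and B: "B \<in> S" and S: "\<forall>J\<in>S. is_ideal (J::'a set)"
  shows "\<exists>M\<in>S. \<forall>J\<in>S. \<not> M \<subset> J"
proof (rule ccontr)
  assume "\<not> ?thesis"
  hence step: "\<forall>J\<in>S. \<exists>J'\<in>S. J \<subset> J'" by blast
  define f where "f = rec_nat B (\<lambda>_ J. SOME J'. J' \<in> S \<and> J \<subset> J')"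
  have nxt: "(SOME J'. J' \<in> S \<and> J \<subset> J') \<in> S \<and> J \<subset> (SOME J'. J' \<in> S \<and> J \<subset> J')"
    if "J \<in> S" for J
  proof -
    have "\<exists>J'. J' \<in> S \<and> J \<subset> J'" using step that by blast
    thus ?thesis by (rule someI_ex)
  qed
  have fsuc: "f (Suc n) = (SOME J'. J' \<in> S \<and> f n \<subset> J')" for n
    unfolding f_def by simp
  have fS: "f n \<in> S" for n
  proof (induction n)
    case 0 show ?case unfolding f_def using B by simp
  next
    case (Suc n) show ?case unfolding fsuc using nxt[OF Suc] by blast
  qed
  have fs: "f n \<subset> f (Suc n)" for n
    unfolding fsuc using nxt[OF fS] by blast
  have acc: "\<forall>f :: nat \<Rightarrow> 'a set. (\<forall>n. is_ideal (f n)) \<and> (\<forall>n. f n \<subseteq> f (Suc n))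
        \<longrightarrow> (\<exists>n. \<forall>m\<ge>n. f m = f n)"
    using noeth unfolding noetherian_ring_def .
  have h1: "\<forall>n. is_ideal (f n)" using fS S by blast
  have h2: "\<forall>n. f n \<subseteq> f (Suc n)" using fs by (simp add: less_imp_le)
  have "\<exists>n. \<forall>m\<ge>n. f m = f n" using acc h1 h2 by blast
  then obtain n where "\<forall>m\<ge>n. f m = f n" by blast
  moreover have "n \<le> Suc n" by simp
  ultimately have "f (Suc n) = f n" by blast
  with fs[of n] show False by simp
qed

lemma nonF_in_prime:
  assumes noeth: "noetherian_ring TYPE('a::comm_ring_1)"
    and G: "gabriel_topology F"
    and B: "is_ideal (B::'a set)" "B \<notin> F"
  shows "\<exists>Q. prime_ideal Q \<and> Q \<notin> F \<and> B \<subseteq> Q"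
proof -
  define S where "S = {J. is_ideal J \<and> B \<subseteq> J \<and> J \<notin> F}"
  have "B \<in> S" using B unfolding S_def by blast
  then obtain M where MS: "M \<in> S" and Mmax: "\<forall>J\<in>S. \<not> M \<subset> J"
    using max_exists[OF noeth, of B S] unfolding S_def by blast
  have Mi: "is_ideal M" and BM: "B \<subseteq> M" and MF: "M \<notin> F" using MS unfolding S_def by auto
  have up: "\<And>J. is_ideal J \<Longrightarrow> M \<subset> J \<Longrightarrow> J \<in> F"
    using Mmax BM unfolding S_def by blast
  have "M \<noteq> UNIV" using UNIV_in_F[OF G] MF by blast
  moreover have "a \<in> M \<or> b \<in> M" if ab: "a * b \<in> M" for a b
  proof (rule ccontr)
    assume nab: "\<not> (a \<in> M \<or> b \<in> M)"
    have CF: "gen_id M a \<in> F"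
    proof (rule up[OF gen_id_ideal[OF Mi]])
      show "M \<subset> gen_id M a" using gen_id_sub[OF Mi, of a] gen_id_mem[OF Mi, of a] nab by blast
    qed
    have DF: "colon_ideal M a \<in> F"
    proof (rule up[OF colon_ideal_ideal[OF Mi]])
      have "M \<subseteq> colon_ideal M a"
      proof
        fix x assume "x \<in> M"
        hence "a * x \<in> M" using Mi unfolding is_ideal_def by blast
        thus "x \<in> colon_ideal M a" unfolding colon_ideal_def by (simp add: mult.commute)
      qed
      moreover have "b \<in> colon_ideal M a" using ab unfolding colon_ideal_def by (simp add: mult.commute)
      ultimately show "M \<subset> colon_ideal M a" using nab by blast
    qed
    have "\<forall>r\<in>gen_id M a. colon_ideal M r \<in> F"
    proof
      fix r assume "r \<in> gen_id M a"
      then obtain p s where r: "r = p + s*a" "p \<in> M" unfolding gen_id_def by blast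
      have "colon_ideal M a \<subseteq> colon_ideal M r"
      proof
        fix t assume "t \<in> colon_ideal M a"
        hence ta: "t * a \<in> M" unfolding colon_ideal_def by simp
        have "t * r = t * p + s * (t * a)" using r by (simp add: algebra_simps)
        moreover have "t * p \<in> M" "s * (t*a) \<in> M" using Mi r ta unfolding is_ideal_def by auto
        ultimately have "t * r \<in> M" using Mi unfolding is_ideal_def by simp
        thus "t \<in> colon_ideal M r" unfolding colon_ideal_def by simp
      qed
      thus "colon_ideal M r \<in> F" using gt_up[OF G DF colon_ideal_ideal[OF Mi]] by blast
    qed
    hence "M \<in> F" using gt_colon[OF G Mi CF] by blast
    thus False using MF by blast
  qed
  ultimately have "prime_ideal M" using Mi unfolding prime_ideal_def by blast
  thus ?thesis using MF BM by blast
qed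

lemma genP_in_F:
  assumes noeth: "noetherian_ring TYPE('a::comm_ring_1)"
    and G: "gabriel_topology F" and PF: "P \<in> F_star F" and d: "(d::'a) \<notin> P"
  shows "gen_id P d \<in> F"
proof (rule ccontr)
  assume nF: "gen_id P d \<notin> F"
  have Pi: "is_ideal P" using PF unfolding F_star_def prime_ideal_def by blast
  obtain Q where Q: "prime_ideal Q" "Q \<notin> F" "gen_id P d \<subseteq> Q"
    using nonF_in_prime[OF noeth G gen_id_ideal[OF Pi] nF] by blast
  have "P \<subseteq> Q" using Q(3) gen_id_sub[OF Pi] by blast
  hence "Q = P" using PF Q unfolding F_star_def by blast
  moreover have "d \<in> Q" using Q(3) gen_id_mem[OF Pi] by blast
  ultimately show False using d by blast
qed

theorem lemma1p2:
  fixes F :: "'a::comm_ring_1 set set"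
    and P :: "'a set"
    and scale :: "'a \<Rightarrow> 'b \<Rightarrow> 'b::ab_group_add"
  assumes "noetherian_ring TYPE('a)"
    and "local_ring TYPE('a)"
    and "gabriel_topology F"
    and "P \<in> F_star F"
    and "module scale"
    and "\<forall>r\<in>P. \<forall>x. scale r x = 0"
  shows "(F_torsion_free scale F \<longleftrightarrow> torsion_free_mod scale P)
       \<and> (F_divisible scale F \<longleftrightarrow> divisible_mod scale P)"
proof -
  note noeth = assms(1) and G = assms(3) and PF = assms(4) and M = assms(5) and ann = assms(6)
  have PnF: "P \<notin> F" using PF unfolding F_star_def by blast
  have Pi: "is_ideal P" using PF unfolding F_star_def prime_ideal_def by blast
  have notsub: "\<exists>d\<in>A. d \<notin> P" if "A \<in> F" for A
  proof (rule ccontr)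
    assume "\<not> ?thesis" hence "A \<subseteq> P" by blast
    hence "P \<in> F" using gt_up[OF G that Pi] by blast
    thus False using PnF by blast
  qed
  have genscale: "scale r x = scale s (scale d x)" if "r = p + s*d" "p \<in> P" for r p s d x
    using that ann module.scale_left_distrib[OF M] module.scale_scale[OF M] by simp
  have a: "F_torsion_free scale F \<longleftrightarrow> torsion_free_mod scale P"
  proof
    assume T: "F_torsion_free scale F"
    show "torsion_free_mod scale P" unfolding torsion_free_mod_def
    proof (intro allI impI)
      fix d x assume d: "d \<notin> P" and dx: "scale d x = 0"
      have AF: "gen_id P d \<in> F" using genP_in_F[OF noeth G PF d] .
      have "x \<in> ann_sub scale (gen_id P d)" unfolding ann_sub_def
      proof (safe)
        fix r assume "r \<in> gen_id P d"
        then obtain p s where "r = p + s*d" "p \<in> P" unfolding gen_id_def by blast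
        hence "scale r x = scale s (scale d x)" by (rule genscale)
        thus "scale r x = 0" using dx module.scale_zero_right[OF M] by simp
      qed
      thus "x = 0" using T AF unfolding F_torsion_free_def by blast
    qed
  next
    assume T: "torsion_free_mod scale P"
    show "F_torsion_free scale F" unfolding F_torsion_free_def
    proof
      fix A assume "A \<in> F"
      then obtain d where "d \<in> A" "d \<notin> P" using notsub by blast
      hence "ann_sub scale A \<subseteq> {0}" using T unfolding ann_sub_def torsion_free_mod_def by blast
      moreover have "0 \<in> ann_sub scale A" unfolding ann_sub_def
        using module.scale_zero_right[OF M] by simp
      ultimately show "ann_sub scale A = {0}" by blast
    qed
  qed
  have b: "F_divisible scale F \<longleftrightarrow> divisible_mod scale P"
  proof
    assume D: "F_divisible scale F"
    show "divisible_mod scale P" unfolding divisible_mod_def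
    proof (intro allI impI)
      fix d assume d: "d \<notin> P"
      have AF: "gen_id P d \<in> F" using genP_in_F[OF noeth G PF d] .
      have sub: "module.subspace scale (range (scale d))"
      proof (rule module.subspaceI[OF M])
        have "scale d 0 = 0" by (rule module.scale_zero_right[OF M])
        thus "0 \<in> range (scale d)" using rangeI[of "scale d" 0] by simp
      next
        fix x y assume "x \<in> range (scale d)" "y \<in> range (scale d)"
        then obtain u v where "x = scale d u" "y = scale d v" by blast
        hence "x + y = scale d (u + v)" by (simp add: module.scale_right_distrib[OF M])
        thus "x + y \<in> range (scale d)" by simp
      next
        fix c x assume "x \<in> range (scale d)"
        then obtain u where "x = scale d u" by blast
        hence "scale c x = scale d (scale c u)"
          using module.scale_left_commute[OF M, of c d u] by simp
        thus "scale c x \<in> range (scale d)" by simp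
      qed
      have "{scale r x | r x. r \<in> gen_id P d} \<subseteq> range (scale d)"
      proof safe
        fix r x assume "r \<in> gen_id P d"
        then obtain p s where "r = p + s*d" "p \<in> P" unfolding gen_id_def by blast
        hence "scale r x = scale s (scale d x)" by (rule genscale)
        hence "scale r x = scale d (scale s x)"
          using module.scale_left_commute[OF M, of s d x] by simp
        thus "scale r x \<in> range (scale d)" by simp
      qed
      hence "ideal_times scale (gen_id P d) \<subseteq> range (scale d)"
        unfolding ideal_times_def using module.span_minimal[OF M] sub by blast
      thus "range (scale d) = UNIV" using D AF unfolding F_divisible_def by blast
    qed
  next
    assume D: "divisible_mod scale P"
    show "F_divisible scale F" unfolding F_divisible_def
    proof
      fix A assume "A \<in> F"
      then obtain d where d: "d \<in> A" "d \<notin> P" using notsub by blast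
      show "ideal_times scale A = UNIV"
      proof (rule sym, rule UNIV_eq_I)
        fix y :: 'b
        obtain x where "y = scale d x" using D d unfolding divisible_mod_def by blast
        hence "y \<in> {scale r x | r x. r \<in> A}" using d by blast
        thus "y \<in> ideal_times scale A" unfolding ideal_times_def
          by (rule module.span_base[OF M])
      qed
    qed
  qed
  show ?thesis using a b by blast
qed

end
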